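(* Let $(X,\preceq)$ be a partially ordered set and suppose there is a metric $d$ on $X$ such that $(X,d)$ is complete and $X$ is regular. Let $f,g,H:X\to X$ be mappings such that: (a) $f(X)\subseteq H(X)$ and $g(X)\subseteq H(X)$; (b) $H(X)$ is a closed subset of $(X,d)$; (c) $f$ and $g$ are weakly increasing with respect to $H$. Suppose there is $\beta\in\mathcal S$ such that for every $(x,y)\in X\times X$ with $Hx$ and $Hy$ comparable, $$d(fx,gy)\le \beta\big(d(Hx,Hy)\big)\,d(Hx,Hy).$$ Then there exists $u\in X$ with $fu=gu=Hu$.
   Context: $X$ is regular means: if $(z_n)$ is a non-decreasing sequence in $X$ with respect to $\preceq$ and $z_n\to z$ in $(X,d)$, then $z_n\preceq z$ for all $n$. $\mathcal S$ denotes the class of functions $\beta:[0,\infty)\to[0,1)$ such that for every sequence $(t_n)$ in $[0,\infty)$, $\beta(t_n)\to 1$ implies $t_n\to 0$. For $R:X\to X$ and $x\in X$, $R^{-1}(x)=\{u\in X: Ru=x\}$. Given mappings $T,S,R:X\to X$ on a partially ordered set with $T(X)\subseteq R(X)$ and $S(X)\subseteq R(X)$, $S$ and $T$ are weakly increasing with respect to $R$ if for all $x\in X$: $Tx\preceq Sy$ for all $y\in R^{-1}(Tx)$, and $Sx\preceq Ty$ for all $y\in R^{-1}(Sx)$. *)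

theory Defs
  imports "HOL-Analysis.Analysis"
begin

text \<open>The partial order on X is an explicit relation le (the type carries the metric).\<close>

definition partial_order_rel :: "('a \<Rightarrow> 'a \<Rightarrow> bool) \<Rightarrow> bool" where
  "partial_order_rel le \<longleftrightarrow>
     (\<forall>x. le x x) \<and> (\<forall>x y. le x y \<and> le y x \<longrightarrow> x = y) \<and>
     (\<forall>x y z. le x y \<and> le y z \<longrightarrow> le x z)"

definition regular_ord :: "('a::metric_space \<Rightarrow> 'a \<Rightarrow> bool) \<Rightarrow> bool" where
  "regular_ord le \<longleftrightarrow>
     (\<forall>(z::nat \<Rightarrow> 'a) z0. monotone (\<le>) le z \<and> z \<longlonglongrightarrow> z0 \<longrightarrow> (\<forall>n. le (z n) z0))"

definition class_S :: "(real \<Rightarrow> real) \<Rightarrow> bool" where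
  "class_S \<beta> \<longleftrightarrow>
     (\<forall>t\<ge>0. 0 \<le> \<beta> t \<and> \<beta> t < 1) \<and>
     (\<forall>t :: nat \<Rightarrow> real. (\<forall>n. 0 \<le> t n) \<longrightarrow> (\<lambda>n. \<beta> (t n)) \<longlonglongrightarrow> 1 \<longrightarrow> t \<longlonglongrightarrow> 0)"

text \<open>S and T weakly increasing with respect to R (range inclusions stated separately).\<close>
definition weakly_increasing_wrt ::
  "('a \<Rightarrow> 'a \<Rightarrow> bool) \<Rightarrow> ('a \<Rightarrow> 'a) \<Rightarrow> ('a \<Rightarrow> 'a) \<Rightarrow> ('a \<Rightarrow> 'a) \<Rightarrow> bool" where
  "weakly_increasing_wrt le T S R \<longleftrightarrow>
     (\<forall>x. (\<forall>y. R y = T x \<longrightarrow> le (T x) (S y)) \<and> (\<forall>y. R y = S x \<longrightarrow> le (S x) (T y)))"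

end

theory Submission
  imports Defs
begin

lemma S_helper:
  fixes t e :: "nat \<Rightarrow> real"
  assumes beta: "class_S \<beta>" and eps: "\<epsilon> > 0" and tge: "\<And>k. t k \<ge> \<epsilon>"
    and ineq: "\<And>k. t k * (1 - \<beta> (t k)) \<le> e k" and e0: "e \<longlonglongrightarrow> 0"
  shows False
proof -
  have S: "(\<forall>t\<ge>0. 0 \<le> \<beta> t \<and> \<beta> t < 1) \<and>
     (\<forall>t :: nat \<Rightarrow> real. (\<forall>n. 0 \<le> t n) \<longrightarrow> (\<lambda>n. \<beta> (t n)) \<longlonglongrightarrow> 1 \<longrightarrow> t \<longlonglongrightarrow> 0)"
    using beta unfolding class_S_def .
  have t0: "t k \<ge> 0" for k using tge[of k] eps by linarith
  have bb: "0 \<le> \<beta> (t k) \<and> \<beta> (t k) < 1" for k using conjunct1[OF S] t0[of k] by simp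
  have up: "1 - \<beta> (t k) \<le> e k / \<epsilon>" for k
  proof -
    have "\<epsilon> * (1 - \<beta> (t k)) \<le> t k * (1 - \<beta> (t k))"
      using tge[of k] bb[of k] by (intro mult_right_mono) auto
    also have "\<dots> \<le> e k" by (rule ineq)
    finally have "(1 - \<beta> (t k)) * \<epsilon> \<le> e k" by (simp only: mult.commute)
    thus ?thesis using eps by (simp only: pos_le_divide_eq)
  qed
  have lo: "0 \<le> 1 - \<beta> (t k)" for k using bb[of k] by simp
  have "(\<lambda>k. e k / \<epsilon>) \<longlonglongrightarrow> 0 / \<epsilon>" by (intro tendsto_divide e0 tendsto_const) (use eps in simp)
  hence ed: "(\<lambda>k. e k / \<epsilon>) \<longlonglongrightarrow> 0" by simp
  have "(\<lambda>k. 1 - \<beta> (t k)) \<longlonglongrightarrow> 0"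
  proof (rule tendsto_sandwich[OF _ _ tendsto_const ed])
    show "\<forall>\<^sub>F n in sequentially. 0 \<le> 1 - \<beta> (t n)" using lo by simp
    show "\<forall>\<^sub>F n in sequentially. 1 - \<beta> (t n) \<le> e n / \<epsilon>" using up by simp
  qed
  hence "(\<lambda>k. 1 - (1 - \<beta> (t k))) \<longlonglongrightarrow> 1 - 0" by (intro tendsto_diff tendsto_const)
  hence b1: "(\<lambda>k. \<beta> (t k)) \<longlonglongrightarrow> 1" by simp
  have t0': "\<forall>n. 0 \<le> t n" using t0 by simp
  have "t \<longlonglongrightarrow> 0" using conjunct2[OF S, rule_format, OF t0 b1] .
  moreover have "\<exists>N. \<forall>n\<ge>N. \<epsilon> \<le> t n" using tge by blast
  ultimately have "\<epsilon> \<le> 0" by (rule LIMSEQ_le_const)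
  thus False using eps by simp
qed

theorem theorem2p6:
  fixes le :: "'a::complete_space \<Rightarrow> 'a \<Rightarrow> bool"
    and f g H :: "'a \<Rightarrow> 'a"
    and \<beta> :: "real \<Rightarrow> real"
  assumes po: "partial_order_rel le"
    and reg: "regular_ord le"
    and a1: "range f \<subseteq> range H" and a2: "range g \<subseteq> range H"
    and b: "closed (range H)"
    and c: "weakly_increasing_wrt le f g H"
    and beta: "class_S \<beta>"
    and contr: "\<And>x y. le (H x) (H y) \<or> le (H y) (H x) \<Longrightarrow>
                  dist (f x) (g y) \<le> \<beta> (dist (H x) (H y)) * dist (H x) (H y)"
  shows "\<exists>u. f u = g u \<and> g u = H u"
proof -
  have refl: "\<And>x. le x x" and trans: "\<And>x y z. le x y \<Longrightarrow> le y z \<Longrightarrow> le x z"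
    using po unfolding partial_order_rel_def by blast+
  have fg: "f x = g x" for x
    using contr[of x x] refl[of "H x"] by simp
  have bb: "\<And>t. t \<ge> 0 \<Longrightarrow> 0 \<le> \<beta> t \<and> \<beta> t < 1" using beta unfolding class_S_def by blast
  have contrf: "dist (f x) (f y) \<le> \<beta> (dist (H x) (H y)) * dist (H x) (H y)"
    if "le (H x) (H y) \<or> le (H y) (H x)" for x y
    using contr[OF that] fg[of y] by simp
  have contrle: "dist (f x) (f y) \<le> dist (H x) (H y)"
    if "le (H x) (H y) \<or> le (H y) (H x)" for x y
  proof -
    have "\<beta> (dist (H x) (H y)) * dist (H x) (H y) \<le> 1 * dist (H x) (H y)"
      using bb[of "dist (H x) (H y)"] by (intro mult_right_mono) auto
    thus ?thesis using contrf[OF that] by simp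
  qed
  define F where "F p = (SOME q. H q = f p)" for p
  have HF: "H (F p) = f p" for p
  proof -
    have "f p \<in> range H" using a1 by (rule subsetD) simp
    then have "\<exists>q. H q = f p" by (metis imageE)
    thus ?thesis unfolding F_def by (rule someI_ex)
  qed
  obtain x0 :: 'a where True by simp
  define x where "x n = (F ^^ n) x0" for n
  have xS: "x (Suc n) = F (x n)" for n unfolding x_def by simp
  define y where "y n = f (x n)" for n
  have Hx: "H (x (Suc n)) = y n" for n using HF xS y_def by simp
  have stepy: "le (y n) (y (Suc n))" for n
  proof -
    have "le (f (x n)) (g (x (Suc n)))" using c Hx[of n] unfolding weakly_increasing_wrt_def y_def
      by blast
    thus ?thesis using fg y_def by simp
  qed
  have mono: "le (y m) (y n)" if "m \<le> n" for m n
    using that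
  proof (induction n rule: dec_induct)
    case base then show ?case by (rule refl)
  next
    case (step n) then show ?case using stepy[of n] trans by blast
  qed
  have comp: "le (y m) (y n) \<or> le (y n) (y m)" for m n
    using mono by (metis nat_le_linear)
  have dxy: "dist (y (Suc m)) (y (Suc n)) \<le> \<beta> (dist (y m) (y n)) * dist (y m) (y n)" for m n
    using contrf[of "x (Suc m)" "x (Suc n)"] Hx comp[of m n] y_def by simp
  define d where "d n = dist (y n) (y (Suc n))" for n
  have d0: "d n \<ge> 0" for n unfolding d_def by simp
  have dS: "d (Suc n) \<le> \<beta> (d n) * d n" for n using dxy[of n "Suc n"] d_def by simp
  have dS': "d (Suc n) \<le> d n" for n
  proof -
    have "\<beta> (d n) * d n \<le> 1 * d n" using bb[OF d0[of n]] d0[of n] by (intro mult_right_mono) auto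
    thus ?thesis using dS[of n] by simp
  qed
  have dec: "antimono_on UNIV d" unfolding decseq_Suc_iff using dS' by blast
  obtain L where dL: "d \<longlonglongrightarrow> L" and Lle: "\<forall>i. L \<le> d i"
    using decseq_convergent[OF dec, of 0] d0 by blast
  have L0: "L \<ge> 0" by (rule LIMSEQ_le_const[OF dL]) (use d0 in auto)
  have L00: "L = 0"
  proof (rule ccontr)
    assume "L \<noteq> 0" hence Lp: "L > 0" using L0 by simp
    have e0: "(\<lambda>k. d k - d (Suc k)) \<longlonglongrightarrow> L - L"
      by (intro tendsto_diff dL) (rule LIMSEQ_Suc[OF dL])
    show False
    proof (rule S_helper[OF beta Lp, of d "\<lambda>k. d k - d (Suc k)"])
      show "L \<le> d k" for k using Lle by blast
      show "d k * (1 - \<beta> (d k)) \<le> d k - d (Suc k)" for k using dS[of k] by (simp add: algebra_simps)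
      show "(\<lambda>k. d k - d (Suc k)) \<longlonglongrightarrow> 0" using e0 by simp
    qed
  qed
  have dmono: "d j \<le> d i" if "i \<le> j" for i j
    using that
  proof (induction j rule: dec_induct)
    case base then show ?case by simp
  next
    case (step n) then show ?case using dS'[of n] by linarith
  qed
  have dto0: "d \<longlonglongrightarrow> 0" using dL L00 by simp
  have dsub: "(\<lambda>k. d (s k)) \<longlonglongrightarrow> 0" if "\<And>k. s k \<ge> k" for s :: "nat \<Rightarrow> nat"
  proof (rule tendsto_sandwich[OF _ _ tendsto_const dto0])
    show "\<forall>\<^sub>F k in sequentially. 0 \<le> d (s k)" using d0 by simp
    show "\<forall>\<^sub>F k in sequentially. d (s k) \<le> d k"
      using dmono that by simp
  qed
  have cau: "Cauchy y"
  proof (rule ccontr)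
    assume "\<not> Cauchy y"
    then obtain \<epsilon> where ep: "\<epsilon> > 0" and hm: "\<forall>M. \<exists>m\<ge>M. \<exists>n\<ge>M. \<not> dist (y m) (y n) < \<epsilon>"
      unfolding Cauchy_def by blast
    have h1: "\<forall>k. \<exists>m. m \<ge> k \<and> (\<exists>n. n \<ge> k \<and> \<epsilon> \<le> dist (y m) (y n))"
      using hm by (auto simp: not_less)
    from choice[OF h1] obtain ms where h2: "\<forall>k. ms k \<ge> k \<and> (\<exists>n. n \<ge> k \<and> \<epsilon> \<le> dist (y (ms k)) (y n))"
      by blast
    have h3: "\<forall>k. \<exists>n. ms k \<ge> k \<and> n \<ge> k \<and> \<epsilon> \<le> dist (y (ms k)) (y n)" using h2 by blast
    from choice[OF h3] obtain ns where mn: "\<forall>k. ms k \<ge> k \<and> ns k \<ge> k \<and> dist (y (ms k)) (y (ns k)) \<ge> \<epsilon>"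
      by blast
    define t where "t k = dist (y (ms k)) (y (ns k))" for k
    show False
    proof (rule S_helper[OF beta ep, of t "\<lambda>k. d (ms k) + d (ns k)"])
      show "\<epsilon> \<le> t k" for k using mn t_def by simp
      show "t k * (1 - \<beta> (t k)) \<le> d (ms k) + d (ns k)" for k
      proof -
        have "t k \<le> dist (y (ms k)) (y (Suc (ms k))) + dist (y (Suc (ms k))) (y (Suc (ns k)))
                     + dist (y (Suc (ns k))) (y (ns k))"
          unfolding t_def
          using dist_triangle[of "y (ms k)" "y (ns k)" "y (Suc (ms k))"]
                dist_triangle[of "y (Suc (ms k))" "y (ns k)" "y (Suc (ns k))"] by linarith
        also have "\<dots> \<le> d (ms k) + \<beta> (t k) * t k + d (ns k)"
          using dxy[of "ms k" "ns k"] unfolding d_def t_def by (simp add: dist_commute)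
        finally show ?thesis by (simp add: algebra_simps)
      qed
      show "(\<lambda>k. d (ms k) + d (ns k)) \<longlonglongrightarrow> 0"
      proof -
        have "(\<lambda>k. d (ms k)) \<longlonglongrightarrow> 0" by (rule dsub) (use mn in blast)
        moreover have "(\<lambda>k. d (ns k)) \<longlonglongrightarrow> 0" by (rule dsub) (use mn in blast)
        ultimately show ?thesis using tendsto_add by fastforce
      qed
    qed
  qed
  then obtain z where yz: "y \<longlonglongrightarrow> z" using Cauchy_convergent_iff convergent_def by blast
  have "z \<in> range H"
    by (rule closed_sequentially[OF b _ yz]) (metis Hx rangeI)
  then obtain u where zu: "z = H u" by blast
  have mon: "monotone (\<le>) le y" unfolding monotone_def using mono by blast
  have lez: "le (y n) (H u)" for n using reg mon yz zu unfolding regular_ord_def by blast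
  have "(\<lambda>n. y (Suc n)) \<longlonglongrightarrow> f u"
  proof -
    have h1: "(\<lambda>n. dist (y n) z) \<longlonglongrightarrow> 0" using yz by (simp only: tendsto_dist_iff[symmetric])
    have h2: "dist (y (Suc n)) (f u) \<le> dist (y n) z" for n
      using contrle[of "x (Suc n)" u] lez[of n] Hx[of n] zu y_def by simp
    have "(\<lambda>n. dist (y (Suc n)) (f u)) \<longlonglongrightarrow> 0"
    proof (rule tendsto_sandwich[OF _ _ tendsto_const h1])
      show "\<forall>\<^sub>F n in sequentially. 0 \<le> dist (y (Suc n)) (f u)" by simp
      show "\<forall>\<^sub>F n in sequentially. dist (y (Suc n)) (f u) \<le> dist (y n) z" using h2 by simp
    qed
    thus ?thesis by (simp only: tendsto_dist_iff[symmetric])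
  qed
  moreover have "(\<lambda>n. y (Suc n)) \<longlonglongrightarrow> z" using LIMSEQ_Suc[OF yz] .
  ultimately have "f u = z" by (rule LIMSEQ_unique)
  hence "f u = g u \<and> g u = H u" using fg[of u] zu by simp
  thus ?thesis by (rule exI)
qed

end
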